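(* Let $\varepsilon,\delta\in(0,1)$ and $\alpha\ge1$. There is a one-pass streaming algorithm that, on any strict turnstile stream on $[n]$ with frequency vector $f$ satisfying the $L_1$ $\alpha$-property, outputs a $(1\pm\varepsilon)$-approximation of $\|f\|_1$ with probability at least $1-\delta$, using $O(\log(\alpha/\varepsilon)+\log(1/\delta)+\log\log n)$ bits of space.
   Context: A data stream on universe $[n]$ is a sequence of $m$ updates $(i_t,\Delta_t)\in[n]\times\{-M,\dots,M\}$; the frequency vector $f\in\mathbb{R}^n$ starts at $0$ and update $(i_t,\Delta_t)$ adds $\Delta_t$ to $f_{i_t}$. It is assumed that $\log(mM)=O(\log n)$. A strict turnstile stream is one in which updates may be negative but every coordinate of the frequency vector is non-negative at all times. The insertion vector $I$ is the frequency vector of the substream of positive updates and the deletion vector $D$ is the entrywise absolute value of the frequency vector of the substream of negative updates, so $f=I-D$. The stream has the $L_1$ $\alpha$-property if $\|I+D\|_1\le\alpha\|f\|_1$. Space is measured in bits. *)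

theory Defs
  imports "HOL-Probability.Probability"
begin

text \<open>Streams: an update is a pair (i, Delta) with i in [n] = {1..n}.\<close>
type_synonym update = "nat \<times> int"

text \<open>The initial memory is random, each update maps the memory to a random new memory
  (fresh coins per step), and the output is a (possibly random) real computed from the
  final memory.\<close>
record stream_alg =
  init :: "bool list pmf"
  step :: "bool list \<Rightarrow> update \<Rightarrow> bool list pmf"
  out_fn :: "bool list \<Rightarrow> real pmf"

definition run :: "stream_alg \<Rightarrow> update list \<Rightarrow> bool list pmf" where
  "run A xs = foldl (\<lambda>p u. bind_pmf p (\<lambda>s. step A s u)) (init A) xs"

definition result :: "stream_alg \<Rightarrow> update list \<Rightarrow> real pmf" where
  "result A xs = bind_pmf (run A xs) (out_fn A)"

definition freq :: "update list \<Rightarrow> nat \<Rightarrow> int" where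
  "freq xs i = sum_list (map snd (filter (\<lambda>u. fst u = i) xs))"

definition ins_vec :: "update list \<Rightarrow> nat \<Rightarrow> int" where
  "ins_vec xs i = freq (filter (\<lambda>u. snd u > 0) xs) i"

definition del_vec :: "update list \<Rightarrow> nat \<Rightarrow> int" where
  "del_vec xs i = \<bar>freq (filter (\<lambda>u. snd u < 0) xs) i\<bar>"

definition l1_norm :: "nat \<Rightarrow> (nat \<Rightarrow> int) \<Rightarrow> real" where
  "l1_norm n f = (\<Sum>i\<in>{1..n}. real_of_int \<bar>f i\<bar>)"

definition valid_stream :: "nat \<Rightarrow> nat \<Rightarrow> nat \<Rightarrow> update list \<Rightarrow> bool" where
  "valid_stream n m M xs \<longleftrightarrow> length xs = m \<and>
     (\<forall>u\<in>set xs. fst u \<in> {1..n} \<and> \<bar>snd u\<bar> \<le> int M)"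

definition strict_turnstile :: "update list \<Rightarrow> bool" where
  "strict_turnstile xs \<longleftrightarrow> (\<forall>k\<le>length xs. \<forall>i. freq (take k xs) i \<ge> 0)"

definition alpha_property :: "real \<Rightarrow> nat \<Rightarrow> update list \<Rightarrow> bool" where
  "alpha_property \<alpha> n xs \<longleftrightarrow>
     l1_norm n (\<lambda>i. ins_vec xs i + del_vec xs i) \<le> \<alpha> * l1_norm n (freq xs)"

definition space_bound :: "stream_alg \<Rightarrow> update list set \<Rightarrow> real \<Rightarrow> bool" where
  "space_bound A S s \<longleftrightarrow> (\<forall>xs\<in>S. \<forall>k\<le>length xs. \<forall>\<sigma>\<in>set_pmf (run A (take k xs)).
      real (length \<sigma>) \<le> s)"

end

theory Submission
  imports Defs "HOL-Library.Log_Nat"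
begin


lemma integral_bind_pmf_fin:
  fixes f :: "'b \<Rightarrow> real"
  assumes fin: "finite (set_pmf M)" and finN: "\<And>x. x \<in> set_pmf M \<Longrightarrow> finite (set_pmf (N x))"
  shows "(\<integral>y. f y \<partial>measure_pmf (bind_pmf M N)) = (\<integral>x. (\<integral>y. f y \<partial>measure_pmf (N x)) \<partial>measure_pmf M)"
proof -
  define U where "U = (\<Union>x\<in>set_pmf M. set_pmf (N x))"
  have finU: "finite U" using fin finN unfolding U_def by auto
  define g where "g y = f y * indicator U y" for y
  obtain B where B: "\<And>y. \<bar>g y\<bar> \<le> B"
  proof -
    have "\<forall>y. \<bar>g y\<bar> \<le> (\<Sum>u\<in>U. \<bar>f u\<bar>)"
    proof
      fix y show "\<bar>g y\<bar> \<le> (\<Sum>u\<in>U. \<bar>f u\<bar>)"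
      proof (cases "y \<in> U")
        case True then show ?thesis unfolding g_def using finU
          by (auto intro: member_le_sum)
      next
        case False then show ?thesis unfolding g_def by (auto intro: sum_nonneg)
      qed
    qed
    then show ?thesis using that by blast
  qed
  have e1: "(\<integral>y. f y \<partial>measure_pmf (bind_pmf M N)) = (\<integral>y. g y \<partial>measure_pmf (bind_pmf M N))"
    by (intro integral_cong_AE) (auto simp: AE_measure_pmf_iff g_def U_def split: split_indicator)
  have e2: "(\<integral>x. (\<integral>y. f y \<partial>measure_pmf (N x)) \<partial>measure_pmf M) = (\<integral>x. (\<integral>y. g y \<partial>measure_pmf (N x)) \<partial>measure_pmf M)"
    by (intro integral_cong_AE) (auto simp: AE_measure_pmf_iff g_def U_def split: split_indicator intro!: integral_cong_AE)
  have "(\<integral>y. g y \<partial>measure_pmf (bind_pmf M N)) = (\<integral>x. (\<integral>y. g y \<partial>measure_pmf (N x)) \<partial>measure_pmf M)"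
    unfolding measure_pmf_bind
    apply (rule integral_bind[where K="count_space UNIV" and B=B and B'=1])
    using B measurable_measure_pmf[of N] 
    by (auto simp: measure_pmf.emeasure_space_1 intro: prob_space_imp_subprob_space prob_space.finite_measure prob_space_measure_pmf
             cong: measurable_cong_sets)
  then show ?thesis using e1 e2 by simp
qed

lemma pmf_int_mono:
  fixes f g :: "'a \<Rightarrow> real"
  assumes "finite (set_pmf p)" "\<And>x. x \<in> set_pmf p \<Longrightarrow> f x \<le> g x"
  shows "(\<integral>x. f x \<partial>measure_pmf p) \<le> (\<integral>x. g x \<partial>measure_pmf p)"
  using assms by (intro integral_mono_AE) (auto simp: AE_measure_pmf_iff intro: integrable_measure_pmf_finite)

definition wI :: "update \<Rightarrow> nat" where "wI u = nat (max 0 (snd u))"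
definition wD :: "update \<Rightarrow> nat" where "wD u = nat (max 0 (- snd u))"
definition posN :: "update list \<Rightarrow> nat" where "posN xs = sum_list (map wI xs)"
definition negN :: "update list \<Rightarrow> nat" where "negN xs = sum_list (map wD xs)"

fun bitsW :: "nat \<Rightarrow> nat \<Rightarrow> bool list" where
  "bitsW 0 z = []"
| "bitsW (Suc w) z = odd z # bitsW w (z div 2)"

fun valB :: "bool list \<Rightarrow> nat" where
  "valB [] = 0"
| "valB (b # bs) = (if b then 1 else 0) + 2 * valB bs"

lemma length_bitsW[simp]: "length (bitsW w z) = w"
  by (induction w arbitrary: z) auto

lemma valB_bitsW: "valB (bitsW w z) = z mod 2^w"
proof (induction w arbitrary: z)
  case 0 then show ?case by simp
next
  case (Suc w)
  have "z mod 2^Suc w = z mod 2 + 2 * ((z div 2) mod 2^w)"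
    by (simp add: mod_mult2_eq mult.commute)
  then show ?case using Suc by (simp add: odd_iff_mod_2_eq_one)
qed

locale ctr =
  fixes K :: nat and Jm :: nat
  assumes K1: "K \<ge> 1"
begin

definition jl :: "nat \<Rightarrow> nat" where "jl Y = (LEAST j. Y < 2*K*2^j)"
definition Top :: nat where "Top = (2*K - 1)*2^Jm"
definition grid :: "nat \<Rightarrow> bool" where "grid Y \<longleftrightarrow> 2^(jl Y) dvd Y"
definition cstep :: "nat \<Rightarrow> nat \<Rightarrow> nat pmf" where
  "cstep X w = (let v = X + w in if v > Top then return_pmf Top else
     let s = (2::nat)^(jl v) in
     map_pmf (\<lambda>b. if b then s*(v div s) + s else s*(v div s))
       (bernoulli_pmf (real (v mod s) / real s)))"
definition Phi :: "nat \<Rightarrow> nat \<Rightarrow> real" where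
  "Phi S Y = (real Y - real S)^2 - (4::real)^(jl Y)/3"

lemma jl_lt: "Y < 2*K*2^(jl Y)"
proof -
  have "Y < 2*K*2^Y"
  proof -
    have "Y < 2^Y" by simp
    also have "\<dots> \<le> 2*K*2^Y" using K1 by simp
    finally show ?thesis .
  qed
  then show ?thesis unfolding jl_def by (rule LeastI)
qed

lemma jl_le: "Y < 2*K*2^j \<Longrightarrow> jl Y \<le> j"
  unfolding jl_def by (rule Least_le)

lemma jl_ge: "K*2^j \<le> Y \<Longrightarrow> j \<le> jl Y"
proof (rule ccontr)
  assume a: "K*2^j \<le> Y" "\<not> j \<le> jl Y"
  then obtain i where j: "j = Suc i" and i: "jl Y \<le> i" by (cases j) auto
  then have "(2::nat)^(jl Y) \<le> 2^i" by (simp add: power_increasing)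
  then have "2*K*2^(jl Y) \<le> 2*K*2^i" by simp
  also have "\<dots> = K*2^j" unfolding j by simp
  finally have "2*K*2^(jl Y) \<le> K*2^j" .
  then have "Y < K*2^j" using jl_lt[of Y] by (rule less_le_trans[rotated])
  then show False using a(1) by simp
qed

lemma jl_mono: "Y \<le> Z \<Longrightarrow> jl Y \<le> jl Z"
  using jl_lt[of Z] by (intro jl_le) simp

lemma jl_pos_ge: "jl Y \<ge> 1 \<Longrightarrow> K*2^(jl Y) \<le> Y"
proof (rule ccontr)
  assume a: "jl Y \<ge> 1" "\<not> K*2^(jl Y) \<le> Y"
  then obtain i where j: "jl Y = Suc i" by (cases "jl Y") auto
  have "K*2^(jl Y) = 2*K*2^i" unfolding j by simp
  then have "Y < 2*K*2^i" using a(2) by (metis not_le)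
  then have "jl Y \<le> i" by (rule jl_le)
  then show False using j by simp
qed

lemma grid_intro: assumes "2^j dvd Y" "Y \<le> 2*K*2^j" shows "grid Y"
proof (cases "Y < 2*K*2^j")
  case True
  then have "jl Y \<le> j" by (rule jl_le)
  then have "(2::nat)^(jl Y) dvd 2^j" by (simp add: le_imp_power_dvd)
  then show ?thesis using assms(1) unfolding grid_def using dvd_trans by blast
next
  case False
  then have Y: "Y = 2*K*2^j" using assms(2) by simp
  then have "Y < 2*K*2^(Suc j)" using K1 by simp
  then have "jl Y \<le> Suc j" by (rule jl_le)
  then have "(2::nat)^(jl Y) dvd 2^(Suc j)" by (rule le_imp_power_dvd)
  moreover have "(2::nat)^(Suc j) dvd Y" unfolding Y by simp
  ultimately show ?thesis unfolding grid_def using dvd_trans by blast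
qed

lemma Top_lt: "Top < 2*K*2^Jm"
  unfolding Top_def using K1 by simp

lemma jl_Top: "jl Top = Jm"
proof -
  have "K*2^Jm \<le> Top" unfolding Top_def using K1 by simp
  then have "Jm \<le> jl Top" by (rule jl_ge)
  moreover have "jl Top \<le> Jm" using Top_lt by (rule jl_le)
  ultimately show ?thesis by simp
qed

lemma grid_Top: "grid Top"
  unfolding grid_def jl_Top by (simp add: Top_def)

lemma dvd_lt_add: fixes a b s :: nat assumes "s dvd a" "s dvd b" "a < b" shows "a + s \<le> b"
proof -
  obtain a' b' where "a = s*a'" "b = s*b'" using assms(1,2) by (auto elim!: dvdE)
  with assms(3) have "a' < b'" by simp
  then have "s*(a'+1) \<le> s*b'" by (intro mult_le_mono2) simp
  then show ?thesis using \<open>a = s*a'\<close> \<open>b = s*b'\<close> by (simp add: algebra_simps)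
qed

lemma nc_facts:
  fixes v :: nat
  assumes v: "v \<le> Top"
  defines "s \<equiv> (2::nat)^(jl v)"
  shows "jl v \<le> Jm" "s dvd Top" "s*(v div s) \<le> v" "grid (s*(v div s))"
    "grid (s*(v div s) + s)" "v mod s > 0 \<Longrightarrow> s*(v div s) + s \<le> Top"
    "jl v \<le> jl (s*(v div s))" "s > 0"
proof -
  show j: "jl v \<le> Jm" using v Top_lt by (intro jl_le) simp
  show sd: "s dvd Top" unfolding s_def Top_def using j by (simp add: le_imp_power_dvd)
  show "s*(v div s) \<le> v" by simp
  show sp: "s > 0" unfolding s_def by simp
  have vlt: "v < 2 * K * s" unfolding s_def by (rule jl_lt)
  then have q: "v div s < 2*K" using sp by (simp add: less_mult_imp_div_less mult.commute)
  show "grid (s*(v div s))"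
    by (rule grid_intro[of "jl v"]) (use q in \<open>auto simp: s_def\<close>)
  have "s*(v div s) + s = s*(v div s + 1)" by simp
  also have "\<dots> \<le> s*(2*K)" using q by (intro mult_le_mono2) simp
  finally have "s*(v div s) + s \<le> 2 * K * s" by (simp add: mult.commute)
  then show "grid (s*(v div s) + s)"
    by (intro grid_intro[of "jl v"]) (auto simp: s_def)
  show "v mod s > 0 \<Longrightarrow> s*(v div s) + s \<le> Top"
  proof -
    assume "v mod s > 0"
    then have "s*(v div s) < v" using mult_div_mod_eq[of s v] by linarith
    then have "s*(v div s) < Top" using v by simp
    then show ?thesis by (intro dvd_lt_add[OF _ sd]) simp
  qed
  show "jl v \<le> jl (s*(v div s))"
  proof (cases "jl v = 0")
    case False
    then have "K * s \<le> v" unfolding s_def using jl_pos_ge by simp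
    then have "K \<le> v div s" using sp by (simp add: div_le_mono le_div_geq mult.commute
          less_eq_div_iff_mult_less_eq)
    then have "K * s \<le> s*(v div s)" by (simp add: mult.commute)
    then show ?thesis unfolding s_def by (rule jl_ge)
  qed simp
qed

lemma cstep_set: assumes "X \<le> Top" "Y \<in> set_pmf (cstep X w)" shows "grid Y \<and> Y \<le> Top"
proof (cases "X + w > Top")
  case True
  then show ?thesis using assms grid_Top by (simp add: cstep_def)
next
  case False
  define v where "v = X + w"
  define s where "s = (2::nat)^(jl v)"
  have v: "v \<le> Top" using False v_def by simp
  note nf = nc_facts[OF v, folded s_def]
  have p01: "0 \<le> real (v mod s) / real s" "real (v mod s) / real s \<le> 1"
    using nf(8) by (auto simp: divide_simps)
  have "Y \<in> (\<lambda>b. if b then s*(v div s) + s else s*(v div s)) ` set_pmf (bernoulli_pmf (real (v mod s) / real s))"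
    using assms(2) False unfolding cstep_def Let_def v_def[symmetric] s_def[symmetric] by simp
  then obtain b where b: "b \<in> set_pmf (bernoulli_pmf (real (v mod s) / real s))"
    and Y: "Y = (if b then s*(v div s) + s else s*(v div s))" by blast
  show ?thesis
  proof (cases b)
    case True
    then have "pmf (bernoulli_pmf (real (v mod s) / real s)) True > 0" using b
      by (simp add: pmf_positive)
    then have "v mod s > 0" using p01 by (auto intro: Nat.gr0I)
    then show ?thesis using Y True nf by simp
  next
    case False
    then show ?thesis using Y False nf(4) le_trans[OF nf(3) v] by auto
  qed
qed

lemma cstep_exp: assumes "X \<le> Top"
  shows "(\<integral>Y. real Y \<partial>measure_pmf (cstep X w)) \<le> real X + real w"
proof (cases "X + w > Top")
  case True
  then show ?thesis by (simp add: cstep_def)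
next
  case False
  define v where "v = X + w"
  define s where "s = (2::nat)^(jl v)"
  have v: "v \<le> Top" using False v_def by simp
  note nf = nc_facts[OF v, folded s_def]
  have p01: "0 \<le> real (v mod s) / real s" "real (v mod s) / real s \<le> 1"
    using nf(8) by (auto simp: divide_simps)
  have "(\<integral>Y. real Y \<partial>measure_pmf (cstep X w)) =
     real (s*(v div s) + s) * (real (v mod s) / real s) + real (s*(v div s)) * (1 - real (v mod s) / real s)"
    using False p01 unfolding cstep_def Let_def v_def[symmetric] s_def[symmetric] by simp
  also have "\<dots> = real (s*(v div s)) + real (v mod s)" using nf(8) by (simp add: field_simps)
  also have "\<dots> = real v" by (metis mult_div_mod_eq of_nat_add)
  finally show ?thesis unfolding v_def by simp
qed

lemma four_pow: "(4::real)^j = real ((2::nat)^j) * real ((2::nat)^j)"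
  by (simp add: power_mult_distrib[symmetric])

lemma lin_aux: fixes x a b c :: real shows "x \<le> b/4 \<Longrightarrow> 0 \<le> c \<Longrightarrow> a*4 \<le> b \<Longrightarrow> x \<le> (b-a)/3 + c"
  by (simp add: field_simps)

lemma key_ineq:
  assumes gX: "grid X" and v: "v = X + w"
  defines "s \<equiv> (2::nat)^(jl v)"
  defines "r \<equiv> v mod s"
  shows "real r * (real s - real r) \<le> ((4::real)^(jl v) - 4^(jl X))/3 + real w * real v / real K"
proof -
  have Kp: "real K > 0" using K1 by simp
  have sp: "s > 0" unfolding s_def by simp
  have rs: "r < s" unfolding r_def using sp by simp
  have jm: "jl X \<le> jl v" using v by (intro jl_mono) simp
  have nn: "0 \<le> real w * real v / real K" by simp
  have f4: "(4::real)^(jl X) \<le> 4^(jl v)" using jm by (intro power_increasing) auto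
  show ?thesis
  proof (cases "jl X = jl v")
    case True
    show ?thesis
    proof (cases "r = 0")
      case True then show ?thesis using nn f4 by simp
    next
      case False
      have "jl v \<noteq> 0"
      proof
        assume "jl v = 0"
        then have "r = 0" unfolding r_def s_def by simp
        with False show False by simp
      qed
      then have Ks: "K * s \<le> v" unfolding s_def using jl_pos_ge by simp
      have "s dvd X" using gX True unfolding grid_def s_def by simp
      then obtain k where "X = s*k" by (auto elim!: dvdE)
      then have "r = w mod s" unfolding r_def v by simp
      then have rw: "r \<le> w" by simp
      have "real r * (real s - real r) \<le> real r * real s" by (simp add: algebra_simps)
      also have "\<dots> \<le> real w * real s" using rw by (intro mult_right_mono) auto
      also have "\<dots> \<le> real w * (real v / real K)"
      proof (intro mult_left_mono)
        show "real s \<le> real v / real K" using Ks Kp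
          by (simp add: field_simps) (metis of_nat_le_iff of_nat_mult mult.commute)
      qed simp
      finally show ?thesis using True by simp
    qed
  next
    case False
    then have lt: "jl X < jl v" using jm by simp
    then have "(4::real)^(jl X) * 4 \<le> 4^(jl v)"
      by (metis Suc_leI power_Suc2 power_increasing numeral_le_iff semiring_norm(68) one_le_numeral)
    moreover have "real r * (real s - real r) \<le> (real s * real s)/4"
    proof -
      have "0 \<le> (real s - 2 * real r)^2" by simp
      then show ?thesis by (simp add: power2_eq_square algebra_simps)
    qed
    moreover have "real s * real s = (4::real)^(jl v)" unfolding s_def four_pow by simp
    ultimately have "real r * (real s - real r) \<le> 4^(jl v) / 4" by simp
    then show ?thesis using lin_aux[OF _ nn \<open>(4::real)^(jl X) * 4 \<le> 4^(jl v)\<close>] by blast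
  qed
qed

lemma cstep_phi:
  assumes gX: "grid X" and XT: "X \<le> Top" and ST: "S + w \<le> Top"
  shows "(\<integral>Y. Phi (S+w) Y \<partial>measure_pmf (cstep X w)) \<le> Phi S X + real w * (real X + real w) / real K"
proof (cases "X + w > Top")
  case True
  have jX: "jl X \<le> Jm" using XT Top_lt by (intro jl_le) simp
  have "(4::real)^(jl X) \<le> 4^Jm" using jX by (intro power_increasing) auto
  moreover have "(real Top - real (S + w))^2 \<le> (real X - real S)^2"
    using True ST by (intro power_mono) auto
  moreover have "0 \<le> real w * (real X + real w) / real K" by simp
  moreover have "(\<integral>Y. Phi (S+w) Y \<partial>measure_pmf (cstep X w)) = Phi (S+w) Top"
    using True by (simp add: cstep_def)
  ultimately show ?thesis unfolding Phi_def jl_Top by linarith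
next
  case False
  define v where "v = X + w"
  define s where "s = (2::nat)^(jl v)"
  define r where "r = v mod s"
  define l where "l = s * (v div s)"
  have v: "v \<le> Top" using False v_def by simp
  note nf = nc_facts[OF v, folded s_def]
  define p where "p = real r / real s"
  have p01: "0 \<le> p" "p \<le> 1"
    using nf(8) by (auto simp: divide_simps p_def r_def)
  have E: "(\<integral>Y. Phi (S+w) Y \<partial>measure_pmf (cstep X w)) = Phi (S+w) (l + s) * p + Phi (S+w) l * (1 - p)"
    using False p01 unfolding cstep_def Let_def v_def[symmetric] s_def[symmetric] l_def[symmetric]
      r_def[symmetric] p_def[symmetric] by simp
  have jl1: "jl v \<le> jl l" using nf(7) unfolding l_def .
  have jl2: "jl v \<le> jl (l + s)" using jl1 jl_mono[of l "l+s"] by simp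
  have P1: "Phi (S+w) (l+s) \<le> (real (l+s) - real (S+w))^2 - 4^(jl v)/3"
    unfolding Phi_def using jl2 by (simp add: power_increasing)
  have P2: "Phi (S+w) l \<le> (real l - real (S+w))^2 - 4^(jl v)/3"
    unfolding Phi_def using jl1 by (simp add: power_increasing)
  have "Phi (S+w) (l + s) * p + Phi (S+w) l * (1 - p) \<le>
      ((real (l+s) - real (S+w))^2 - 4^(jl v)/3) * p + ((real l - real (S+w))^2 - 4^(jl v)/3) * (1 - p)"
    using P1 P2 p01 by (intro add_mono mult_right_mono) auto
  also have "\<dots> = (real v - real (S+w))^2 + real r * (real s - real r) - 4^(jl v)/3"
  proof -
    have vv: "real v = real l + real r" unfolding l_def r_def by (metis mult_div_mod_eq of_nat_add)
    have s0: "real s > 0" using nf(8) by simp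
    show ?thesis unfolding p_def vv using s0
      by (simp add: field_simps power2_eq_square)
  qed
  also have "\<dots> \<le> (real X - real S)^2 + ((4::real)^(jl v) - 4^(jl X))/3 + real w * real v / real K - 4^(jl v)/3"
  proof -
    have k: "real r * (real s - real r) \<le> ((4::real)^(jl v) - 4^(jl X))/3 + real w * real v / real K"
      using key_ineq[OF gX v_def] by (simp add: s_def r_def)
    have "real v - real (S + w) = real X - real S" unfolding v_def by simp
    then have "(real v - real (S + w))^2 = (real X - real S)^2" by (simp only:)
    then show ?thesis using k by linarith
  qed
  also have "\<dots> = Phi S X + real w * (real X + real w) / real K"
    unfolding Phi_def v_def by (simp add: field_simps)
  finally show ?thesis using E by simp
qed

lemma cstep_fin: "finite (set_pmf (cstep X w))"
  unfolding cstep_def Let_def by auto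

definition pstep :: "nat \<times> nat \<Rightarrow> update \<Rightarrow> (nat \<times> nat) pmf" where
  "pstep x u = (if 0 \<le> snd u then map_pmf (\<lambda>a. (a, snd x)) (cstep (fst x) (wI u))
                else map_pmf (\<lambda>b. (fst x, b)) (cstep (snd x) (wD u)))"

definition runN :: "update list \<Rightarrow> (nat \<times> nat) pmf" where
  "runN xs = foldl (\<lambda>p u. bind_pmf p (\<lambda>x. pstep x u)) (return_pmf (0,0)) xs"

definition G :: "(nat \<times> nat) set" where
  "G = {x. grid (fst x) \<and> fst x \<le> Top \<and> grid (snd x) \<and> snd x \<le> Top}"

lemma G_fin: "finite G"
  by (rule finite_subset[of _ "{..Top} \<times> {..Top}"]) (auto simp: G_def)

lemma pstep_fin: "finite (set_pmf (pstep x u))"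
  unfolding pstep_def using cstep_fin by auto

lemma pstep_set: "x \<in> G \<Longrightarrow> set_pmf (pstep x u) \<subseteq> G"
  unfolding pstep_def G_def using cstep_set by auto

lemma runN_snoc: "runN (xs @ [u]) = bind_pmf (runN xs) (\<lambda>x. pstep x u)"
  unfolding runN_def by simp

lemma jl0: "jl 0 = 0" using jl_le[of 0 0] K1 by simp

lemma runN_set: "set_pmf (runN xs) \<subseteq> G"
proof (induction xs rule: rev_induct)
  case Nil then show ?case by (simp add: runN_def G_def grid_def jl0)
next
  case (snoc u xs)
  have "\<And>x. x \<in> set_pmf (runN xs) \<Longrightarrow> set_pmf (pstep x u) \<subseteq> G"
    using snoc.IH pstep_set by blast
  then show ?case unfolding runN_snoc set_bind_pmf by blast
qed

lemma runN_fin: "finite (set_pmf (runN xs))"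
  using runN_set G_fin finite_subset by blast

lemma posN_snoc: "posN (xs @ [u]) = posN xs + wI u" by (simp add: posN_def)
lemma negN_snoc: "negN (xs @ [u]) = negN xs + wD u" by (simp add: negN_def)

definition Inv :: "update list \<Rightarrow> bool" where
  "Inv xs \<longleftrightarrow>
    (\<integral>x. real (fst x) \<partial>measure_pmf (runN xs)) \<le> real (posN xs) \<and>
    (\<integral>x. real (snd x) \<partial>measure_pmf (runN xs)) \<le> real (negN xs) \<and>
    (\<integral>x. Phi (posN xs) (fst x) \<partial>measure_pmf (runN xs)) \<le> -1/3 + real (posN xs)^2 / real K \<and>
    (\<integral>x. Phi (negN xs) (snd x) \<partial>measure_pmf (runN xs)) \<le> -1/3 + real (negN xs)^2 / real K"

lemma sq_step: "real S^2 / real K + real w * (real S + real w) / real K \<le> real (S + w)^2 / real K"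
proof -
  have "real S^2 + real w * (real S + real w) \<le> real (S + w)^2"
    by (simp add: power2_eq_square algebra_simps)
  then show ?thesis by (simp add: add_divide_distrib[symmetric] divide_right_mono)
qed

lemma Inv_all: "posN xs \<le> Top \<Longrightarrow> negN xs \<le> Top \<Longrightarrow> Inv xs"
proof (induction xs rule: rev_induct)
  case Nil then show ?case by (simp add: Inv_def runN_def Phi_def jl0 posN_def negN_def)
next
  case (snoc u xs)
  have IH: "Inv xs" using snoc by (intro snoc.IH) (simp_all add: posN_snoc negN_snoc)
  define p where "p = runN xs"
  have pf: "finite (set_pmf p)" unfolding p_def by (rule runN_fin)
  have pG: "set_pmf p \<subseteq> G" unfolding p_def by (rule runN_set)
  have int: "integrable (measure_pmf p) f" for f :: "nat \<times> nat \<Rightarrow> real"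
    using pf by (rule integrable_measure_pmf_finite)
  have bnd: "(\<integral>y. f y \<partial>measure_pmf (runN (xs @ [u]))) = (\<integral>x. (\<integral>y. f y \<partial>measure_pmf (pstep x u)) \<partial>measure_pmf p)"
    for f :: "nat \<times> nat \<Rightarrow> real"
    unfolding runN_snoc p_def[symmetric] by (rule integral_bind_pmf_fin[OF pf pstep_fin])
  note IHs = IH[unfolded Inv_def p_def[symmetric]]
  show ?case
  proof (cases "0 \<le> snd u")
    case True
    have wD0: "wD u = 0" using True by (simp add: wD_def)
    define w where "w = wI u"
    have ST: "posN xs + w \<le> Top" using snoc.prems by (simp add: posN_snoc w_def)
    have ps: "pstep x u = map_pmf (\<lambda>a. (a, snd x)) (cstep (fst x) w)" for x
      using True by (simp add: pstep_def w_def)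
    have e1: "(\<integral>y. real (fst y) \<partial>measure_pmf (runN (xs @ [u]))) \<le> real (posN (xs@[u]))"
    proof -
      have "(\<integral>y. real (fst y) \<partial>measure_pmf (runN (xs @ [u]))) \<le> (\<integral>x. real (fst x) + real w \<partial>measure_pmf p)"
        unfolding bnd ps using pG by (intro pmf_int_mono[OF pf]) (auto simp: G_def intro: cstep_exp)
      also have "\<dots> = (\<integral>x. real (fst x) \<partial>measure_pmf p) + real w" using int by simp
      finally show ?thesis using IHs by (simp add: posN_snoc w_def)
    qed
    have e2: "(\<integral>y. real (snd y) \<partial>measure_pmf (runN (xs @ [u]))) \<le> real (negN (xs@[u]))"
      using IHs unfolding bnd ps by (simp add: negN_snoc wD0)
    have e3: "(\<integral>y. Phi (posN (xs@[u])) (fst y) \<partial>measure_pmf (runN (xs @ [u]))) \<le> -1/3 + real (posN (xs@[u]))^2 / real K"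
    proof -
      have "(\<integral>y. Phi (posN (xs@[u])) (fst y) \<partial>measure_pmf (runN (xs @ [u]))) \<le>
          (\<integral>x. Phi (posN xs) (fst x) + real w * (real (fst x) + real w) / real K \<partial>measure_pmf p)"
        unfolding bnd ps posN_snoc w_def[symmetric] using pG ST
        by (intro pmf_int_mono[OF pf]) (auto simp: G_def intro: cstep_phi)
      also have "\<dots> = (\<integral>x. Phi (posN xs) (fst x) \<partial>measure_pmf p) +
           real w * ((\<integral>x. real (fst x) \<partial>measure_pmf p) + real w) / real K"
        using int by (simp add: algebra_simps add_divide_distrib)
      also have "\<dots> \<le> (-1/3 + real (posN xs)^2 / real K) + real w * (real (posN xs) + real w) / real K"
        using IHs by (intro add_mono divide_right_mono mult_left_mono) auto
      also have "\<dots> \<le> -1/3 + real (posN (xs@[u]))^2 / real K"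
        using sq_step[of "posN xs" w] by (simp add: posN_snoc w_def)
      finally show ?thesis .
    qed
    have e4: "(\<integral>y. Phi (negN (xs@[u])) (snd y) \<partial>measure_pmf (runN (xs @ [u]))) \<le> -1/3 + real (negN (xs@[u]))^2 / real K"
      using IHs unfolding bnd ps by (simp add: negN_snoc wD0)
    show ?thesis using e1 e2 e3 e4 unfolding Inv_def by blast
  next
    case False
    have wI0: "wI u = 0" using False by (simp add: wI_def)
    define w where "w = wD u"
    have ST: "negN xs + w \<le> Top" using snoc.prems by (simp add: negN_snoc w_def)
    have ps: "pstep x u = map_pmf (\<lambda>b. (fst x, b)) (cstep (snd x) w)" for x
      using False by (simp add: pstep_def w_def)
    have e1: "(\<integral>y. real (snd y) \<partial>measure_pmf (runN (xs @ [u]))) \<le> real (negN (xs@[u]))"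
    proof -
      have "(\<integral>y. real (snd y) \<partial>measure_pmf (runN (xs @ [u]))) \<le> (\<integral>x. real (snd x) + real w \<partial>measure_pmf p)"
        unfolding bnd ps using pG by (intro pmf_int_mono[OF pf]) (auto simp: G_def intro: cstep_exp)
      also have "\<dots> = (\<integral>x. real (snd x) \<partial>measure_pmf p) + real w" using int by simp
      finally show ?thesis using IHs by (simp add: negN_snoc w_def)
    qed
    have e2: "(\<integral>y. real (fst y) \<partial>measure_pmf (runN (xs @ [u]))) \<le> real (posN (xs@[u]))"
      using IHs unfolding bnd ps by (simp add: posN_snoc wI0)
    have e3: "(\<integral>y. Phi (negN (xs@[u])) (snd y) \<partial>measure_pmf (runN (xs @ [u]))) \<le> -1/3 + real (negN (xs@[u]))^2 / real K"
    proof -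
      have "(\<integral>y. Phi (negN (xs@[u])) (snd y) \<partial>measure_pmf (runN (xs @ [u]))) \<le>
          (\<integral>x. Phi (negN xs) (snd x) + real w * (real (snd x) + real w) / real K \<partial>measure_pmf p)"
        unfolding bnd ps negN_snoc w_def[symmetric] using pG ST
        by (intro pmf_int_mono[OF pf]) (auto simp: G_def intro: cstep_phi)
      also have "\<dots> = (\<integral>x. Phi (negN xs) (snd x) \<partial>measure_pmf p) +
           real w * ((\<integral>x. real (snd x) \<partial>measure_pmf p) + real w) / real K"
        using int by (simp add: algebra_simps add_divide_distrib)
      also have "\<dots> \<le> (-1/3 + real (negN xs)^2 / real K) + real w * (real (negN xs) + real w) / real K"
        using IHs by (intro add_mono divide_right_mono mult_left_mono) auto
      also have "\<dots> \<le> -1/3 + real (negN (xs@[u]))^2 / real K"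
        using sq_step[of "negN xs" w] by (simp add: negN_snoc w_def)
      finally show ?thesis .
    qed
    have e4: "(\<integral>y. Phi (posN (xs@[u])) (fst y) \<partial>measure_pmf (runN (xs @ [u]))) \<le> -1/3 + real (posN (xs@[u]))^2 / real K"
      using IHs unfolding bnd ps by (simp add: posN_snoc wI0)
    show ?thesis using e1 e2 e3 e4 unfolding Inv_def by blast
  qed
qed

lemma sq_ineq: fixes a b :: real shows "(a - b)^2 \<le> 2*a^2 + 2*b^2"
proof -
  have "(a-b)^2 + (a+b)^2 = 2*a^2 + 2*b^2" by (simp add: power2_eq_square algebra_simps)
  moreover have "0 \<le> (a+b)^2" by simp
  ultimately show ?thesis by linarith
qed

lemma lin3: fixes e a b A B :: real shows "e \<le> 2*a + 2*b \<Longrightarrow> a \<le> A \<Longrightarrow> b \<le> B \<Longrightarrow> e \<le> 2*A + 2*B"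
  by linarith

lemma lin4: fixes x P q :: real shows "x \<le> P + (1 + 2*x + q)/3 \<Longrightarrow> x \<le> 3*P + 1 + q"
  by (simp add: field_simps)

lemma four_jl_bound: "(4::real)^(jl Y) \<le> 1 + real Y^2 / real K^2"
proof (cases "jl Y = 0")
  case True then show ?thesis by simp
next
  case False
  then have "K * 2^(jl Y) \<le> Y" using jl_pos_ge by simp
  then have "real K * 2^(jl Y) \<le> real Y" by (metis of_nat_le_iff of_nat_mult of_nat_numeral of_nat_power)
  then have "(real K * 2^(jl Y))^2 \<le> real Y^2" by (intro power_mono) auto
  moreover have "(real K * 2^(jl Y))^2 = real K^2 * 4^(jl Y)"
    by (simp add: power2_eq_square power_mult_distrib[symmetric] algebra_simps)
  ultimately have "real K^2 * 4^(jl Y) \<le> real Y^2" by simp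
  then have "4^(jl Y) \<le> real Y^2 / real K^2" using K1 by (simp add: field_simps)
  then show ?thesis by simp
qed

lemma pt_bound: "(real Y - real S)^2 \<le> 3 * Phi S Y + 1 + 2 * real S^2 / real K"
proof -
  define d where "d = real Y - real S"
  have K2: "real K^2 \<ge> 1" using K1 by simp
  have Kk: "real K^2 \<ge> real K" using K1 by (simp add: power2_eq_square)
  have Y2: "real Y^2 \<le> 2*d^2 + 2*real S^2"
  proof -
    have "real Y = d + real S" unfolding d_def by simp
    moreover have "(d + real S)^2 \<le> 2*d^2 + 2*real S^2"
      using sq_ineq[of d "- real S"] by simp
    ultimately show ?thesis by simp
  qed
  have a: "(4::real)^(jl Y) \<le> 1 + (2*d^2 + 2*real S^2) / real K^2"
  proof -
    have "real Y^2 / real K^2 \<le> (2*d^2 + 2*real S^2) / real K^2"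
      using Y2 K2 by (intro divide_right_mono) auto
    then show ?thesis using four_jl_bound[of Y] by linarith
  qed
  have b: "(2*d^2) / real K^2 \<le> 2*d^2"
  proof -
    have "2*d^2 * 1 \<le> 2*d^2 * real K^2" using K2 by (intro mult_left_mono) auto
    then show ?thesis using K2 by (simp add: divide_le_eq)
  qed
  have c: "(2*real S^2) / real K^2 \<le> 2*real S^2 / real K"
    using Kk K1 by (intro divide_left_mono) auto
  have "d^2 = Phi S Y + 4^(jl Y)/3" unfolding Phi_def d_def by simp
  then have "d^2 \<le> Phi S Y + (1 + 2*d^2 + 2*real S^2 / real K)/3"
    using a b c by (simp add: add_divide_distrib)
  then show ?thesis unfolding d_def by (rule lin4)
qed

lemma final_err:
  assumes "posN xs \<le> Top" "negN xs \<le> Top"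
  shows "(\<integral>x. ((real (fst x) - real (snd x)) - (real (posN xs) - real (negN xs)))^2 \<partial>measure_pmf (runN xs))
         \<le> 10 * (real (posN xs)^2 + real (negN xs)^2) / real K"
proof -
  let ?p = "runN xs"
  let ?I = "posN xs" and ?D = "negN xs"
  have I: "Inv xs" using assms by (rule Inv_all)
  have pf: "finite (set_pmf ?p)" by (rule runN_fin)
  have int: "integrable (measure_pmf ?p) f" for f :: "nat \<times> nat \<Rightarrow> real"
    using pf by (rule integrable_measure_pmf_finite)
  have "(\<integral>x. ((real (fst x) - real (snd x)) - (real ?I - real ?D))^2 \<partial>measure_pmf ?p) \<le>
     (\<integral>x. 2 * (3 * Phi ?I (fst x) + 1 + 2 * real ?I^2 / real K) + 2 * (3 * Phi ?D (snd x) + 1 + 2 * real ?D^2 / real K) \<partial>measure_pmf ?p)"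
  proof (rule pmf_int_mono[OF pf])
    fix x
    have e: "((real (fst x) - real (snd x)) - (real ?I - real ?D))^2 \<le> 2*(real (fst x) - real ?I)^2 + 2*(real (snd x) - real ?D)^2"
      using sq_ineq[of "real (fst x) - real ?I" "real (snd x) - real ?D"] by (simp add: algebra_simps)
    show "((real (fst x) - real (snd x)) - (real ?I - real ?D))^2 \<le> 2 * (3 * Phi ?I (fst x) + 1 + 2 * real ?I^2 / real K) + 2 * (3 * Phi ?D (snd x) + 1 + 2 * real ?D^2 / real K)"
      by (rule lin3[OF e pt_bound[of "fst x" ?I] pt_bound[of "snd x" ?D]])
  qed
  also have "\<dots> = 6 * (\<integral>x. Phi ?I (fst x) \<partial>measure_pmf ?p) + 6 * (\<integral>x. Phi ?D (snd x) \<partial>measure_pmf ?p)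
       + 4 + 4 * real ?I^2 / real K + 4 * real ?D^2 / real K"
    using int by (simp add: algebra_simps)
  also have "\<dots> \<le> 6 * (-1/3 + real ?I^2 / real K) + 6 * (-1/3 + real ?D^2 / real K)
       + 4 + 4 * real ?I^2 / real K + 4 * real ?D^2 / real K"
    using I unfolding Inv_def by (intro add_mono mult_left_mono order_refl) auto
  also have "\<dots> = 10 * (real ?I^2 + real ?D^2) / real K" using K1 by (simp add: field_simps)
  finally show ?thesis .
qed

definition Z1 :: nat where "Z1 = (Jm + 1) * (2 * K)"
definition W1 :: nat where "W1 = floorlog 2 Z1"
definition idx :: "nat \<Rightarrow> nat" where "idx X = jl X * (2 * K) + X div 2^(jl X)"
definition unidx :: "nat \<Rightarrow> nat" where "unidx i = (i mod (2 * K)) * 2^(i div (2 * K))"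
definition enc :: "nat \<times> nat \<Rightarrow> bool list" where
  "enc x = bitsW (2 * W1) (idx (fst x) * Z1 + idx (snd x))"
definition dec :: "bool list \<Rightarrow> nat \<times> nat" where
  "dec \<sigma> = (unidx (valB \<sigma> div Z1), unidx (valB \<sigma> mod Z1))"

definition alg :: stream_alg where
  "alg = \<lparr> init = return_pmf (enc (0,0)),
          step = (\<lambda>\<sigma> u. map_pmf enc (pstep (dec \<sigma>) u)),
          out_fn = (\<lambda>\<sigma>. return_pmf (real (fst (dec \<sigma>)) - real (snd (dec \<sigma>)))) \<rparr>"

lemma idx_props: assumes "grid X" "X \<le> Top" shows "idx X < Z1" "unidx (idx X) = X"
proof -
  have q: "X div 2^(jl X) < 2 * K" using jl_lt[of X] by (simp add: less_mult_imp_div_less)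
  have j: "jl X \<le> Jm" using assms(2) Top_lt by (intro jl_le) simp
  have "idx X < jl X * (2 * K) + 2 * K" unfolding idx_def using q by simp
  also have "\<dots> = (jl X + 1) * (2 * K)" by simp
  also have "\<dots> \<le> (Jm + 1) * (2 * K)" using j by (intro mult_right_mono) auto
  finally show "idx X < Z1" unfolding Z1_def .
  have d1: "idx X div (2 * K) = jl X" unfolding idx_def using q K1 by simp
  have d2: "idx X mod (2 * K) = X div 2^(jl X)" unfolding idx_def using q K1 by simp
  show "unidx (idx X) = X" unfolding unidx_def d1 d2
    using assms(1) unfolding grid_def by simp
qed

lemma Z1_pos: "Z1 > 0" unfolding Z1_def using K1 by simp

lemma Z1_sq: "Z1 * Z1 \<le> 2^(2 * W1)"
proof -
  have "Z1 < 2^W1" unfolding W1_def using floorlog_bounds[OF Z1_pos, of 2] by simp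
  then have "Z1 * Z1 \<le> 2^W1 * 2^W1" by (intro mult_le_mono) auto
  then show ?thesis by (simp add: power_add[symmetric] mult_2)
qed

lemma dec_enc: assumes "x \<in> G" shows "dec (enc x) = x"
proof -
  obtain a b where x: "x = (a,b)" by (cases x)
  have a: "idx a < Z1" "unidx (idx a) = a" using assms idx_props[of a] unfolding x G_def by auto
  have b: "idx b < Z1" "unidx (idx b) = b" using assms idx_props[of b] unfolding x G_def by auto
  have "idx a * Z1 + idx b < Z1 * Z1"
  proof -
    have "idx a * Z1 + idx b < idx a * Z1 + Z1" using b by simp
    also have "\<dots> = (idx a + 1) * Z1" by simp
    also have "\<dots> \<le> Z1 * Z1" using a by (intro mult_right_mono) auto
    finally show ?thesis .
  qed
  then have lt: "idx a * Z1 + idx b < 2^(2*W1)" using Z1_sq by simp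
  have v: "valB (enc (a,b)) = idx a * Z1 + idx b" unfolding enc_def valB_bitsW using lt by simp
  show ?thesis unfolding x dec_def v using a b by simp
qed

lemma run_alg: "run alg xs = map_pmf enc (runN xs)"
proof (induction xs rule: rev_induct)
  case Nil then show ?case by (simp add: run_def alg_def runN_def)
next
  case (snoc u xs)
  have "run alg (xs @ [u]) = bind_pmf (run alg xs) (\<lambda>\<sigma>. step alg \<sigma> u)" by (simp add: run_def)
  also have "\<dots> = bind_pmf (runN xs) (\<lambda>x. map_pmf enc (pstep (dec (enc x)) u))"
    unfolding snoc.IH by (simp add: bind_map_pmf alg_def)
  also have "\<dots> = bind_pmf (runN xs) (\<lambda>x. map_pmf enc (pstep x u))"
    by (intro bind_pmf_cong refl) (simp add: dec_enc[OF subsetD[OF runN_set]])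
  also have "\<dots> = map_pmf enc (runN (xs @ [u]))" unfolding runN_snoc by (simp add: map_bind_pmf)
  finally show ?case .
qed

lemma space_alg: "\<sigma> \<in> set_pmf (run alg xs) \<Longrightarrow> length \<sigma> = 2 * W1"
  unfolding run_alg by (auto simp: enc_def)

lemma result_alg: "result alg xs = map_pmf (\<lambda>x. real (fst x) - real (snd x)) (runN xs)"
proof -
  have "result alg xs = bind_pmf (runN xs) (\<lambda>x. return_pmf (real (fst (dec (enc x))) - real (snd (dec (enc x)))))"
    unfolding result_def run_alg by (simp add: bind_map_pmf alg_def)
  also have "\<dots> = bind_pmf (runN xs) (\<lambda>x. return_pmf (real (fst x) - real (snd x)))"
    by (intro bind_pmf_cong refl) (simp add: dec_enc[OF subsetD[OF runN_set]])
  finally show ?thesis by (simp add: map_pmf_def)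
qed

end



lemma freq_Cons: "freq (x#xs) i = (if fst x = i then snd x else 0) + freq xs i"
  by (simp add: freq_def)

lemma freq_Nil: "freq [] i = 0" by (simp add: freq_def)

lemma sum_freq: "finite I \<Longrightarrow> fst ` set xs \<subseteq> I \<Longrightarrow> (\<Sum>i\<in>I. freq xs i) = sum_list (map snd xs)"
proof (induction xs)
  case Nil then show ?case by (simp add: freq_Nil)
next
  case (Cons x xs)
  have "(\<Sum>i\<in>I. freq (x#xs) i) = (\<Sum>i\<in>I. (if fst x = i then snd x else 0)) + (\<Sum>i\<in>I. freq xs i)"
    unfolding freq_Cons by (simp add: sum.distrib)
  also have "(\<Sum>i\<in>I. (if fst x = i then snd x else 0)) = snd x"
    using Cons.prems by (simp add: sum.delta)
  finally show ?case using Cons by simp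
qed

lemma wI_wD: "int (wI u) - int (wD u) = snd u" by (simp add: wI_def wD_def)

lemma sum_snd: "sum_list (map snd xs) = int (posN xs) - int (negN xs)"
proof (induction xs)
  case Nil then show ?case by (simp add: posN_def negN_def)
next
  case (Cons x xs) then show ?case using wI_wD[of x] by (simp add: posN_def negN_def)
qed

lemma sum_snd_pos: "sum_list (map snd (filter (\<lambda>u. snd u > 0) xs)) = int (posN xs)"
  by (induction xs) (auto simp: posN_def wI_def)

lemma sum_snd_neg: "sum_list (map snd (filter (\<lambda>u. snd u < 0) xs)) = - int (negN xs)"
  by (induction xs) (auto simp: negN_def wD_def)

lemma freq_pos_nonneg: "freq (filter (\<lambda>u. snd u > 0) xs) i \<ge> 0"
  by (induction xs) (auto simp: freq_def)

lemma freq_neg_nonpos: "freq (filter (\<lambda>u. snd u < 0) xs) i \<le> 0"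
  by (induction xs) (auto simp: freq_def)

lemma stream_L:
  assumes v: "valid_stream n m M xs" and st: "strict_turnstile xs"
  shows "l1_norm n (freq xs) = real (posN xs) - real (negN xs)"
proof -
  have nn: "freq xs i \<ge> 0" for i using st unfolding strict_turnstile_def
    by (metis order_refl take_all)
  have sub: "fst ` set xs \<subseteq> {1..n}" using v unfolding valid_stream_def by auto
  have "l1_norm n (freq xs) = real_of_int (\<Sum>i\<in>{1..n}. freq xs i)"
    unfolding l1_norm_def using nn by simp
  also have "\<dots> = real_of_int (sum_list (map snd xs))" using sub by (simp add: sum_freq)
  also have "\<dots> = real (posN xs) - real (negN xs)" unfolding sum_snd by simp
  finally show ?thesis .
qed

lemma stream_T:
  assumes v: "valid_stream n m M xs"
  shows "l1_norm n (\<lambda>i. ins_vec xs i + del_vec xs i) = real (posN xs) + real (negN xs)"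
proof -
  have sub: "fst ` set xs \<subseteq> {1..n}" using v unfolding valid_stream_def by auto
  have e: "\<bar>ins_vec xs i + del_vec xs i\<bar> = freq (filter (\<lambda>u. snd u > 0) xs) i - freq (filter (\<lambda>u. snd u < 0) xs) i" for i
    unfolding ins_vec_def del_vec_def using freq_pos_nonneg[of xs i] freq_neg_nonpos[of xs i] by simp
  have "l1_norm n (\<lambda>i. ins_vec xs i + del_vec xs i) =
     real_of_int ((\<Sum>i\<in>{1..n}. freq (filter (\<lambda>u. snd u > 0) xs) i) - (\<Sum>i\<in>{1..n}. freq (filter (\<lambda>u. snd u < 0) xs) i))"
    unfolding l1_norm_def e by (simp add: sum_subtractf)
  also have "\<dots> = real_of_int (int (posN xs) + int (negN xs))"
    using sub by (subst (1 2) sum_freq) (auto simp: sum_snd_pos sum_snd_neg)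
  finally show ?thesis by simp
qed

lemma sum_list_le_len: "(\<And>x. x \<in> set xs \<Longrightarrow> f x \<le> c) \<Longrightarrow> sum_list (map f xs) \<le> length xs * (c::nat)"
proof (induction xs)
  case (Cons a xs)
  have "f a \<le> c" using Cons.prems by simp
  moreover have "sum_list (map f xs) \<le> length xs * c" using Cons by simp
  ultimately show ?case by simp
qed simp

lemma stream_bound:
  assumes v: "valid_stream n m M xs"
  shows "posN xs + negN xs \<le> m * M"
proof -
  have "posN xs + negN xs = sum_list (map (\<lambda>u. wI u + wD u) xs)"
    by (induction xs) (auto simp: posN_def negN_def)
  also have "\<dots> \<le> length xs * M"
  proof (rule sum_list_le_len)
    fix u assume "u \<in> set xs"
    then have "\<bar>snd u\<bar> \<le> int M" using v unfolding valid_stream_def by auto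
    then show "wI u + wD u \<le> M" unfolding wI_def wD_def by auto
  qed
  finally show ?thesis using v unfolding valid_stream_def by simp
qed




context ctr begin

lemma prob_part:
  fixes \<epsilon> \<delta> \<alpha> :: real
  assumes v: "valid_stream n m M xs" and st: "strict_turnstile xs" and al: "alpha_property \<alpha> n xs"
    and e: "0 < \<epsilon>" and d: "0 < \<delta>" and a: "\<alpha> \<ge> 1"
    and Kb: "10 * \<alpha>^2 / (\<epsilon>^2 * \<delta>) \<le> real K"
    and IT: "posN xs \<le> Top" and DT: "negN xs \<le> Top"
  shows "measure_pmf.prob (result alg xs) {y. \<bar>y - l1_norm n (freq xs)\<bar> \<le> \<epsilon> * l1_norm n (freq xs)} \<ge> 1 - \<delta>"
proof -
  define I where "I = real (posN xs)"
  define D where "D = real (negN xs)"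
  define L where "L = l1_norm n (freq xs)"
  have L: "L = I - D" unfolding L_def I_def D_def by (rule stream_L[OF v st])
  have T: "I + D \<le> \<alpha> * L" using al unfolding alpha_property_def stream_T[OF v] L_def I_def D_def .
  have I0: "I \<ge> 0" "D \<ge> 0" unfolding I_def D_def by auto
  define g where "g x = real (fst x) - real (snd x)" for x :: "nat \<times> nat"
  let ?p = "runN xs"
  define E where "E = (\<integral>x. (g x - L)^2 \<partial>measure_pmf ?p)"
  have int: "integrable (measure_pmf ?p) f" for f :: "nat \<times> nat \<Rightarrow> real"
    using runN_fin by (rule integrable_measure_pmf_finite)
  have Kp: "real K > 0" using K1 by simp
  have E1: "E \<le> 10 * (I^2 + D^2) / real K"
    using final_err[OF IT DT] unfolding E_def g_def L I_def D_def by simp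
  have "I^2 + D^2 \<le> (I + D)^2" using I0 by (simp add: power2_eq_square algebra_simps)
  also have "\<dots> \<le> (\<alpha> * L)^2" using T I0 by (intro power_mono) auto
  finally have "10 * (I^2 + D^2) / real K \<le> 10 * (\<alpha> * L)^2 / real K"
    using Kp by (intro divide_right_mono) auto
  also have "\<dots> \<le> \<epsilon>^2 * \<delta> * L^2"
  proof -
    have ed: "\<epsilon>^2 * \<delta> > 0" using e d by simp
    have "10 * \<alpha>^2 \<le> real K * (\<epsilon>^2 * \<delta>)" using Kb ed by (simp add: divide_le_eq)
    then have "10 * \<alpha>^2 * L^2 \<le> real K * (\<epsilon>^2 * \<delta>) * L^2" by (intro mult_right_mono) auto
    then show ?thesis using Kp by (simp add: divide_le_eq power_mult_distrib algebra_simps)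
  qed
  finally have E2: "E \<le> \<epsilon>^2 * \<delta> * L^2" using E1 by linarith
  have E0: "E \<ge> 0" unfolding E_def by simp
  have res: "result alg xs = map_pmf g ?p" unfolding result_alg g_def by simp
  let ?good = "{x. \<bar>g x - L\<bar> \<le> \<epsilon> * L}"
  have goal: "measure_pmf.prob (result alg xs) {y. \<bar>y - L\<bar> \<le> \<epsilon> * L} = measure_pmf.prob ?p ?good"
    unfolding res by (simp add: vimage_def)
  show ?thesis
  proof (cases "L > 0")
    case True
    define c where "c = \<epsilon>^2 * L^2"
    have c: "c > 0" unfolding c_def using True e by simp
    have "UNIV - ?good \<subseteq> {x \<in> space (measure_pmf ?p). (g x - L)^2 \<ge> c}"
    proof
      fix x assume "x \<in> UNIV - ?good"
      then have "\<epsilon> * L < \<bar>g x - L\<bar>" by simp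
      moreover have "0 \<le> \<epsilon> * L" using True e by simp
      ultimately have "(\<epsilon> * L)^2 \<le> \<bar>g x - L\<bar>^2" by (intro power_mono) auto
      then show "x \<in> {x \<in> space (measure_pmf ?p). (g x - L)^2 \<ge> c}"
        unfolding c_def by (simp add: power_mult_distrib)
    qed
    then have "measure_pmf.prob ?p (UNIV - ?good) \<le> measure_pmf.prob ?p {x \<in> space (measure_pmf ?p). (g x - L)^2 \<ge> c}"
      by (intro measure_pmf.finite_measure_mono) auto
    also have "\<dots> \<le> E / c" unfolding E_def
      by (rule integral_Markov_inequality_measure[OF int]) (use c in auto)
    also have "\<dots> \<le> \<delta>" using E2 c unfolding c_def by (simp add: divide_le_eq algebra_simps)
    finally have "measure_pmf.prob ?p (UNIV - ?good) \<le> \<delta>" .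
    moreover have "measure_pmf.prob ?p (UNIV - ?good) = 1 - measure_pmf.prob ?p ?good"
      using measure_pmf.prob_compl[of ?good ?p] by simp
    ultimately show ?thesis unfolding goal L_def[symmetric] by linarith
  next
    case False
    have "\<alpha> * L \<ge> 0" using T I0 by linarith
    then have "L \<ge> 0" using a by (simp add: zero_le_mult_iff)
    then have "L = 0" using False by simp
    then have "E \<le> 0" using E2 by simp
    then have "E = 0" using E0 by simp
    then have "AE x in measure_pmf ?p. (g x - L)^2 = 0" unfolding E_def
      by (subst (asm) integral_nonneg_eq_0_iff_AE[OF int]) auto
    then have "AE x in measure_pmf ?p. x \<in> ?good" by eventually_elim (simp add: \<open>L = 0\<close>)
    then have "measure_pmf.prob ?p ?good = 1" by (subst measure_pmf.prob_eq_1) auto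
    then show ?thesis unfolding goal L_def[symmetric] using d by simp
  qed
qed

end



lemma floorlog_real: assumes "x > 0" shows "real (floorlog 2 x) \<le> log 2 (real x) + 1"
proof -
  have "log 2 (real x) \<ge> 0" using assms by simp
  then have "real (nat \<lfloor>log 2 (real x)\<rfloor>) \<le> log 2 (real x)" by linarith
  then show ?thesis using assms unfolding floorlog_def by simp
qed

lemma space_arith:
  fixes c \<epsilon> \<delta> \<alpha> :: real and n N :: nat
  assumes c: "c > 0" and n: "n \<ge> 2" and N: "real N \<le> real n powr c"
    and e: "0 < \<epsilon>" "\<epsilon> < 1" and d: "0 < \<delta>" "\<delta> < 1" and a: "\<alpha> \<ge> 1"
  defines "K \<equiv> nat \<lceil>10 * \<alpha>^2 / (\<epsilon>^2 * \<delta>)\<rceil>"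
  defines "Jm \<equiv> floorlog 2 N"
  shows "real (2 * floorlog 2 ((Jm + 1) * (2 * K))) \<le>
     (2 * log 2 (c + 2) + 2 * log 2 22 + 2) + 2 * log 2 (log 2 (real n)) + 4 * log 2 (\<alpha> / \<epsilon>) + 2 * log 2 (1 / \<delta>)"
proof -
  define R where "R = 10 * \<alpha>^2 / (\<epsilon>^2 * \<delta>)"
  have e2: "\<epsilon>^2 < 1" using e unfolding power2_eq_square
    using mult_strict_mono[of \<epsilon> 1 \<epsilon> 1] by simp
  have ed: "0 < \<epsilon>^2 * \<delta>" "\<epsilon>^2 * \<delta> < 1" using e d e2
    using mult_strict_mono[of "\<epsilon>^2" 1 \<delta> 1] by auto
  have a2: "\<alpha>^2 \<ge> 1" using a by (simp add: one_le_power)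
  have R10: "R \<ge> 10" unfolding R_def using ed a2 by (simp add: le_divide_eq)
  have KR: "real K \<le> R + 1" unfolding K_def R_def[symmetric] using R10 by linarith
  have Kpos: "K \<ge> 1" unfolding K_def R_def[symmetric] using R10 by linarith
  have K22: "2 * real K \<le> 22 * (\<alpha> / \<epsilon>)^2 * (1 / \<delta>)"
  proof -
    have "2 * real K \<le> 2.2 * R" using KR R10 by linarith
    also have "\<dots> = 22 * (\<alpha> / \<epsilon>)^2 * (1 / \<delta>)" unfolding R_def by (simp add: power_divide)
    finally show ?thesis .
  qed
  have ln1: "log 2 (real n) \<ge> 1" using n by simp
  have Jb: "real Jm + 1 \<le> (c + 2) * log 2 (real n)"
  proof (cases "N = 0")
    case True
    then have "Jm = 0" unfolding Jm_def floorlog_def by simp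
    then show ?thesis using ln1 c
      by (smt (verit) mult_le_cancel_right1 of_nat_0)
  next
    case False
    have "real Jm \<le> log 2 (real N) + 1" unfolding Jm_def using False by (intro floorlog_real) simp
    also have "log 2 (real N) \<le> log 2 (real n powr c)" using False N n by (intro log_mono) auto
    also have "\<dots> = c * log 2 (real n)" by (simp add: log_powr)
    finally have "real Jm + 1 \<le> c * log 2 (real n) + 2" by simp
    also have "\<dots> \<le> (c + 2) * log 2 (real n)" using ln1 by (simp add: algebra_simps)
    finally show ?thesis .
  qed
  have Z: "(Jm + 1) * (2 * K) > 0" using Kpos by simp
  have "real (2 * floorlog 2 ((Jm + 1) * (2 * K))) \<le> 2 * (log 2 (real ((Jm + 1) * (2 * K))) + 1)"
    using floorlog_real[OF Z] by simp
  also have "log 2 (real ((Jm + 1) * (2 * K))) = log 2 (real Jm + 1) + log 2 (2 * real K)"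
  proof -
    have "real ((Jm + 1) * (2 * K)) = (real Jm + 1) * (2 * real K)" by (simp add: algebra_simps)
    then show ?thesis using Kpos by (simp only:) (intro log_mult_pos, auto)
  qed
  also have "log 2 (real Jm + 1) \<le> log 2 ((c + 2) * log 2 (real n))"
    using Jb by (intro log_mono) auto
  also have "\<dots> = log 2 (c + 2) + log 2 (log 2 (real n))" using c ln1 by (intro log_mult_pos) auto
  also have "log 2 (2 * real K) \<le> log 2 (22 * (\<alpha> / \<epsilon>)^2 * (1 / \<delta>))"
    using K22 Kpos by (intro log_mono) auto
  also have "\<dots> = log 2 22 + 2 * log 2 (\<alpha> / \<epsilon>) + log 2 (1 / \<delta>)"
  proof -
    have xp: "\<alpha> / \<epsilon> > 0" using e a by simp
    have yp: "1 / \<delta> > 0" using d by simp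
    have "log 2 (22 * (\<alpha> / \<epsilon>)^2 * (1 / \<delta>)) = log 2 (22 * (\<alpha> / \<epsilon>)^2) + log 2 (1 / \<delta>)"
      by (rule log_mult_pos) (use xp yp in auto)
    moreover have "log 2 (22 * (\<alpha> / \<epsilon>)^2) = log 2 22 + log 2 ((\<alpha> / \<epsilon>)^2)"
      by (rule log_mult_pos) (use xp in auto)
    moreover have "log 2 ((\<alpha> / \<epsilon>)^2) = 2 * log 2 (\<alpha> / \<epsilon>)"
      using log_nat_power[of "\<alpha> / \<epsilon>" 2 2] xp by simp
    ultimately show ?thesis by simp
  qed
  finally show ?thesis by simp
qed

definition mix_alg :: "nat \<Rightarrow> stream_alg" where
  "mix_alg N = \<lparr> init = return_pmf [], step = (\<lambda>_ _. return_pmf []),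
                 out_fn = (\<lambda>_. map_pmf real (pmf_of_set {0..N})) \<rparr>"

lemma run_mix: "run (mix_alg N) xs = return_pmf []"
proof (induction xs rule: rev_induct)
  case Nil then show ?case by (simp add: run_def mix_alg_def)
next
  case (snoc u xs)
  have "run (mix_alg N) (xs @ [u]) = bind_pmf (run (mix_alg N) xs) (\<lambda>\<sigma>. step (mix_alg N) \<sigma> u)"
    by (simp add: run_def)
  then show ?case using snoc by (simp add: mix_alg_def)
qed

lemma mix_prob:
  fixes \<epsilon> \<delta> :: real
  assumes v: "valid_stream n m M xs" and st: "strict_turnstile xs"
    and d: "1 - \<delta> \<le> 1 / (real (m * M) + 1)" and e: "0 < \<epsilon>"
  shows "measure_pmf.prob (result (mix_alg (m * M)) xs) {y. \<bar>y - l1_norm n (freq xs)\<bar> \<le> \<epsilon> * l1_norm n (freq xs)} \<ge> 1 - \<delta>"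
proof -
  define N where "N = m * M"
  define L where "L = l1_norm n (freq xs)"
  have L: "L = real (posN xs) - real (negN xs)" unfolding L_def by (rule stream_L[OF v st])
  have L0: "L \<ge> 0" unfolding L_def l1_norm_def by (intro sum_nonneg) auto
  then have DI: "negN xs \<le> posN xs" using L by simp
  define l where "l = posN xs - negN xs"
  have Ll: "L = real l" unfolding l_def L using DI by simp
  have lN: "l \<le> N" unfolding l_def N_def using stream_bound[OF v] by simp
  have res: "result (mix_alg N) xs = map_pmf real (pmf_of_set {0..N})"
    unfolding result_def run_mix by (simp add: mix_alg_def)
  have "1 - \<delta> \<le> 1 / (real N + 1)" using d unfolding N_def .
  also have "\<dots> = measure_pmf.prob (pmf_of_set {0..N}) {l}"
    using lN by (simp add: measure_pmf_single)
  also have "\<dots> \<le> measure_pmf.prob (pmf_of_set {0..N}) (real -` {y. \<bar>y - L\<bar> \<le> \<epsilon> * L})"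
    using e by (intro measure_pmf.finite_measure_mono) (auto simp: Ll)
  also have "\<dots> = measure_pmf.prob (result (mix_alg N) xs) {y. \<bar>y - L\<bar> \<le> \<epsilon> * L}"
    unfolding res by simp
  finally show ?thesis unfolding N_def L_def .
qed

lemma kappa_bound:
  fixes c \<epsilon> \<delta> \<alpha> :: real and n N :: nat
  assumes c: "c > 0" and n: "n \<ge> 2" and N: "real N \<le> real n powr c"
    and e: "0 < \<epsilon>" "\<epsilon> < 1" and d: "0 < \<delta>" "\<delta> < 1" and a: "\<alpha> \<ge> 1"
    and nd: "\<not> (1 - \<delta> \<le> 1 / (real N + 1))"
  shows "min (log 2 (log 2 3)) (log 2 ((2 powr c + 1) / 2 powr c)) \<le>
     log 2 (\<alpha> / \<epsilon>) + log 2 (1 / \<delta>) + log 2 (log 2 (real n))"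
proof -
  have A: "log 2 (\<alpha> / \<epsilon>) > 0" using e a by simp
  have B: "log 2 (1 / \<delta>) > 0" using d by simp
  have ln1: "log 2 (real n) \<ge> 1" using n by simp
  have LL: "log 2 (log 2 (real n)) \<ge> 0" using ln1 by simp
  show ?thesis
  proof (cases "n \<ge> 3")
    case True
    have "(3::real) \<le> real n" using True by simp
    then have "log 2 3 \<le> log 2 (real n)" by (intro log_mono) auto
    moreover have "log 2 (3::real) > 0" by simp
    ultimately have "log 2 (log 2 3) \<le> log 2 (log 2 (real n))" by (intro log_mono) (use True in auto)
    then show ?thesis using A B by linarith
  next
    case False
    then have n2: "n = 2" using n by simp
    have LL0: "log 2 (log 2 (real n)) = 0" unfolding n2 by simp
    define P where "P = (2::real) powr c"
    have P1: "P \<ge> 1" unfolding P_def using c by (intro ge_one_powr_ge_zero) auto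
    have NP: "real N \<le> P" using N unfolding P_def n2 by simp
    have N1: "N \<ge> 1"
    proof (rule ccontr)
      assume "\<not> N \<ge> 1" then have "N = 0" by simp
      then show False using nd d by simp
    qed
    have dl: "\<delta> < real N / (real N + 1)" using nd by (simp add: field_simps)
    have "(P + 1) / P \<le> (real N + 1) / real N"
      using NP N1 P1 by (simp add: field_simps)
    also have "\<dots> < 1 / \<delta>" using dl d N1 by (simp add: field_simps)
    finally have "(P + 1) / P < 1 / \<delta>" .
    then have "log 2 ((P + 1) / P) \<le> log 2 (1 / \<delta>)" using P1 by (intro log_mono) auto
    then show ?thesis using A LL0 unfolding P_def by linarith
  qed
qed

theorem theorem5p2:
  fixes c :: real
  assumes "c > 0"
  shows "\<exists>C>0. \<forall>(n::nat) (m::nat) (M::nat) (\<epsilon>::real) (\<delta>::real) (\<alpha>::real).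
     n \<ge> 2 \<and> real (m * M) \<le> real n powr c \<and> 0 < \<epsilon> \<and> \<epsilon> < 1 \<and> 0 < \<delta> \<and> \<delta> < 1 \<and> \<alpha> \<ge> 1 \<longrightarrow>
     (\<exists>A. let S = {xs. valid_stream n m M xs \<and> strict_turnstile xs \<and> alpha_property \<alpha> n xs} in
        space_bound A S (C * (log 2 (\<alpha> / \<epsilon>) + log 2 (1 / \<delta>) + log 2 (log 2 n))) \<and>
        (\<forall>xs\<in>S. measure_pmf.prob (result A xs)
            {y. \<bar>y - l1_norm n (freq xs)\<bar> \<le> \<epsilon> * l1_norm n (freq xs)} \<ge> 1 - \<delta>))"
proof -
  define \<kappa> where "\<kappa> = min (log 2 (log 2 3)) (log 2 ((2 powr c + 1) / 2 powr c))"
  have k1: "log 2 (log 2 (3::real)) > 0" by simp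
  have "(1::real) < (2 powr c + 1) / 2 powr c" by (simp add: field_simps)
  then have "log 2 1 < log 2 ((2 powr c + 1) / 2 powr c)"
    by (subst log_less_cancel_iff) (auto simp: add_pos_pos)
  then have k2: "log 2 ((2 powr c + 1) / 2 powr c) > 0" by simp
  have \<kappa>: "\<kappa> > 0" unfolding \<kappa>_def using k1 k2 by simp
  define C0 where "C0 = 2 * log 2 (c + 2) + 2 * log 2 22 + 2"
  have "log 2 (c + 2) > 0" using assms by simp
  moreover have "log 2 (22::real) > 0" by simp
  ultimately have C0: "C0 > 0" unfolding C0_def by linarith
  define C where "C = 4 + C0 / \<kappa>"
  have Cp: "C > 0" unfolding C_def using C0 \<kappa> by (simp add: add_pos_nonneg)
  show ?thesis
  proof (intro exI[of _ C] conjI Cp allI impI)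
    fix n m M :: nat and \<epsilon> \<delta> \<alpha> :: real
    assume H: "n \<ge> 2 \<and> real (m * M) \<le> real n powr c \<and> 0 < \<epsilon> \<and> \<epsilon> < 1 \<and> 0 < \<delta> \<and> \<delta> < 1 \<and> \<alpha> \<ge> 1"
    then have n: "n \<ge> 2" and N: "real (m * M) \<le> real n powr c" and e: "0 < \<epsilon>" "\<epsilon> < 1"
      and d: "0 < \<delta>" "\<delta> < 1" and a: "\<alpha> \<ge> 1" by auto
    define S where "S = {xs. valid_stream n m M xs \<and> strict_turnstile xs \<and> alpha_property \<alpha> n xs}"
    define \<Sigma> where "\<Sigma> = log 2 (\<alpha> / \<epsilon>) + log 2 (1 / \<delta>) + log 2 (log 2 (real n))"
    have Apos: "log 2 (\<alpha> / \<epsilon>) > 0" using e a by simp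
    have Bpos: "log 2 (1 / \<delta>) > 0" using d by simp
    have LLpos: "log 2 (log 2 (real n)) \<ge> 0" using n by simp
    have \<Sigma>0: "\<Sigma> \<ge> 0" unfolding \<Sigma>_def using Apos Bpos LLpos by simp
    have "\<exists>A. space_bound A S (C * \<Sigma>) \<and>
        (\<forall>xs\<in>S. measure_pmf.prob (result A xs)
            {y. \<bar>y - l1_norm n (freq xs)\<bar> \<le> \<epsilon> * l1_norm n (freq xs)} \<ge> 1 - \<delta>)"
    proof (cases "1 - \<delta> \<le> 1 / (real (m * M) + 1)")
      case True
      show ?thesis
      proof (intro exI[of _ "mix_alg (m * M)"] conjI ballI)
        show "space_bound (mix_alg (m * M)) S (C * \<Sigma>)"
          unfolding space_bound_def run_mix using Cp \<Sigma>0 by simp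
        fix xs assume "xs \<in> S"
        then show "measure_pmf.prob (result (mix_alg (m * M)) xs)
            {y. \<bar>y - l1_norm n (freq xs)\<bar> \<le> \<epsilon> * l1_norm n (freq xs)} \<ge> 1 - \<delta>"
          unfolding S_def using mix_prob[OF _ _ True e(1)] by blast
      qed
    next
      case False
      define K where "K = nat \<lceil>10 * \<alpha>^2 / (\<epsilon>^2 * \<delta>)\<rceil>"
      define Jm where "Jm = floorlog 2 (m * M)"
      have ed: "0 < \<epsilon>^2 * \<delta>" using e d by simp
      have Kb: "10 * \<alpha>^2 / (\<epsilon>^2 * \<delta>) \<le> real K" unfolding K_def by linarith
      have "10 * \<alpha>^2 / (\<epsilon>^2 * \<delta>) > 0" using ed a by simp
      then have K1: "K \<ge> 1" unfolding K_def by linarith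
      interpret ctr K Jm by unfold_locales (rule K1)
      have sp: "real (2 * W1) \<le> C * \<Sigma>"
      proof -
        have "real (2 * W1) \<le> C0 + 2 * log 2 (log 2 (real n)) + 4 * log 2 (\<alpha> / \<epsilon>) + 2 * log 2 (1 / \<delta>)"
          unfolding W1_def Z1_def C0_def using space_arith[OF assms n N e d a] unfolding K_def Jm_def
          by simp
        also have "\<dots> \<le> C0 + 4 * \<Sigma>" unfolding \<Sigma>_def using Apos Bpos LLpos by simp
        also have "C0 \<le> (C0 / \<kappa>) * \<Sigma>"
        proof -
          have "\<kappa> \<le> \<Sigma>" unfolding \<kappa>_def \<Sigma>_def by (rule kappa_bound[OF assms n N e d a False])
          then have "C0 * \<kappa> \<le> C0 * \<Sigma>" using C0 by (intro mult_left_mono) auto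
          then show ?thesis using \<kappa> by (simp add: field_simps)
        qed
        finally show ?thesis unfolding C_def by (simp add: algebra_simps)
      qed
      have NT: "m * M \<le> Top"
      proof (cases "m * M = 0")
        case False
        then have "m * M < 2^Jm" unfolding Jm_def using floorlog_bounds[of "m * M" 2] by simp
        also have "\<dots> \<le> Top" unfolding Top_def using K1 by simp
        finally show ?thesis by simp
      next
        case True then show ?thesis by auto
      qed
      show ?thesis
      proof (intro exI[of _ alg] conjI ballI)
        show "space_bound alg S (C * \<Sigma>)"
          unfolding space_bound_def using space_alg sp by simp
        fix xs assume "xs \<in> S"
        then have v: "valid_stream n m M xs" and st: "strict_turnstile xs" and al: "alpha_property \<alpha> n xs"
          unfolding S_def by auto
        have b: "posN xs + negN xs \<le> m * M" by (rule stream_bound[OF v])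
        show "measure_pmf.prob (result alg xs)
            {y. \<bar>y - l1_norm n (freq xs)\<bar> \<le> \<epsilon> * l1_norm n (freq xs)} \<ge> 1 - \<delta>"
          by (rule prob_part[OF v st al e(1) d(1) a Kb]) (use b NT in auto)
      qed
    qed
    then show "\<exists>A. let S = {xs. valid_stream n m M xs \<and> strict_turnstile xs \<and> alpha_property \<alpha> n xs} in
        space_bound A S (C * (log 2 (\<alpha> / \<epsilon>) + log 2 (1 / \<delta>) + log 2 (log 2 n))) \<and>
        (\<forall>xs\<in>S. measure_pmf.prob (result A xs)
            {y. \<bar>y - l1_norm n (freq xs)\<bar> \<le> \<epsilon> * l1_norm n (freq xs)} \<ge> 1 - \<delta>)"
      unfolding S_def \<Sigma>_def Let_def by simp
  qed
qed


end
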